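(* Let $n\ge 2$ and let $f$ be the $n$-ary operation on $\mathbb{Z}_8$ given by $f=2x_1\cdots x_n\left(\sum_{i=1}^n a_ix_i^2+\sum_{i=1}^n b_ix_i+c\right)$ with $a_i,b_i\in\{0,1\}$ and $c\in\{0,1,2,3\}$. Then $\sum_{i=1}^na_i+\sum_{i=1}^nb_i+c$ is even if and only if $f$ preserves the relation $$M=\{\mathbf{u}\in Z\mid a_{\{1,3\}}\equiv 0\pmod 4\},$$ where $a_{\{1,3\}}$ is the coefficient of $\mathbf{g}^{\{1,3\}}$ in the unique expression $\mathbf{u}=\sum_{A\in P_4}a_A\mathbf{g}^A$.
   Context: $P_4$ is the power set of $\{1,2,3,4\}$. For $A\in P_4$, $\mathbf{g}^A\in\mathbb{Z}_8^{P_4}$ is the tuple with $B$-component $1$ if $A\subseteq B$ and $0$ otherwise. Every $\mathbf{u}\in\mathbb{Z}_8^{P_4}$ has a unique expression $\mathbf{u}=\sum_{A\in P_4}a_A\mathbf{g}^A$ with $a_A\in\mathbb{Z}_8$. $Z\subseteq \mathbb{Z}_8^{P_4}$ consists of all $\mathbf{u}$ whose coefficients satisfy: (Z1) $a_{\{2\}}\equiv 2a_{\{1\}}\pmod 4$ and $a_{\{4\}}\equiv 2a_{\{3\}}\pmod 4$; (Z2) $a_A\equiv 0\pmod 2$ whenever $|A|\ge 2$; (Z3) $a_A\equiv 0\pmod 4$ whenever $|A|\ge 2$ and $A\cap\{2,4\}\neq\emptyset$; (Z4) $a_A=0$ whenever $\{2,4\}\subseteq A$. An operation preserves a relation if applying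 it componentwise to elements of the relation yields an element of the relation. *)

theory Defs
  imports Main
begin

(* Z_8 is represented by the integers 0..7 with arithmetic mod 8.
   Elements of Z_8^{P_4} are functions nat set => int, only their values on P_4 matter. *)

definition P4 :: "nat set set" where
  "P4 = Pow {1..4}"

(* the tuple sum_{A in P4} alpha_A g^A, evaluated at component B *)
definition gcomb :: "(nat set \<Rightarrow> int) \<Rightarrow> nat set \<Rightarrow> int" where
  "gcomb \<alpha> B = (\<Sum>A\<in>P4. if A \<subseteq> B then \<alpha> A else 0) mod 8"

(* alpha is a valid coefficient family in Z_8 satisfying (Z1)-(Z4) *)
definition Zcoeffs :: "(nat set \<Rightarrow> int) \<Rightarrow> bool" where
  "Zcoeffs \<alpha> \<longleftrightarrow>
     (\<forall>A\<in>P4. 0 \<le> \<alpha> A \<and> \<alpha> A < 8) \<and>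
     \<alpha> {2} mod 4 = (2 * \<alpha> {1}) mod 4 \<and> \<alpha> {4} mod 4 = (2 * \<alpha> {3}) mod 4 \<and>
     (\<forall>A\<in>P4. card A \<ge> 2 \<longrightarrow> \<alpha> A mod 2 = 0) \<and>
     (\<forall>A\<in>P4. card A \<ge> 2 \<and> A \<inter> {2,4} \<noteq> {} \<longrightarrow> \<alpha> A mod 4 = 0) \<and>
     (\<forall>A\<in>P4. {2,4} \<subseteq> A \<longrightarrow> \<alpha> A = 0)"

definition Zrel :: "(nat set \<Rightarrow> int) set" where
  "Zrel = {u. \<exists>\<alpha>. Zcoeffs \<alpha> \<and> (\<forall>B\<in>P4. u B = gcomb \<alpha> B)}"

definition Mrel :: "(nat set \<Rightarrow> int) set" where
  "Mrel = {u. \<exists>\<alpha>. Zcoeffs \<alpha> \<and> (\<forall>B\<in>P4. u B = gcomb \<alpha> B) \<and> \<alpha> {1,3} mod 4 = 0}"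

definition preserves :: "nat \<Rightarrow> ((nat \<Rightarrow> int) \<Rightarrow> int) \<Rightarrow> (nat set \<Rightarrow> int) set \<Rightarrow> bool" where
  "preserves n f R \<longleftrightarrow>
     (\<forall>us :: nat \<Rightarrow> nat set \<Rightarrow> int. (\<forall>i\<in>{1..n}. us i \<in> R) \<longrightarrow> (\<lambda>B. f (\<lambda>i. us i B)) \<in> R)"

definition opf :: "nat \<Rightarrow> (nat \<Rightarrow> int) \<Rightarrow> (nat \<Rightarrow> int) \<Rightarrow> int \<Rightarrow> (nat \<Rightarrow> int) \<Rightarrow> int" where
  "opf n a b c x =
     (2 * (\<Prod>i=1..n. x i) * ((\<Sum>i=1..n. a i * (x i)^2) + (\<Sum>i=1..n. b i * x i) + c)) mod 8"

end

theory Submission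
  imports Defs
begin


lemma sum_Pow_insert:
  assumes "finite B" "x \<notin> B"
  shows "(\<Sum>A\<in>Pow (insert x B). f A) = (\<Sum>A\<in>Pow B. f A) + (\<Sum>A\<in>Pow B. f (insert x A))"
proof -
  have d: "Pow B \<inter> insert x ` Pow B = {}" using assms by auto
  have inj: "inj_on (insert x) (Pow B)"
  proof (rule inj_onI)
    fix A A' assume "A \<in> Pow B" "A' \<in> Pow B" "insert x A = insert x A'"
    thus "A = A'" using assms(2) by (metis Diff_insert_absorb PowD subsetD)
  qed
  have "(\<Sum>A\<in>Pow (insert x B). f A) = (\<Sum>A\<in>Pow B. f A) + (\<Sum>A\<in>insert x ` Pow B. f A)"
    unfolding Pow_insert using assms d by (simp add: sum.union_disjoint)
  also have "(\<Sum>A\<in>insert x ` Pow B. f A) = (\<Sum>A\<in>Pow B. f (insert x A))"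
    using inj by (simp add: sum.reindex)
  finally show ?thesis .
qed

definition mob :: "(nat set \<Rightarrow> int) \<Rightarrow> nat set \<Rightarrow> int" where
  "mob W A = (\<Sum>C\<in>Pow A. (-1)^card (A - C) * W C)"

lemma mob_insert:
  assumes "finite S" "x \<notin> S"
  shows "mob W (insert x S) = mob (\<lambda>C. W (insert x C)) S - mob W S"
proof -
  have "mob W (insert x S) = (\<Sum>C\<in>Pow S. (-1)^card (insert x S - C) * W C)
        + (\<Sum>C\<in>Pow S. (-1)^card (insert x S - insert x C) * W (insert x C))"
    unfolding mob_def by (rule sum_Pow_insert[OF assms])
  also have "(\<Sum>C\<in>Pow S. (-1)^card (insert x S - C) * W C) = - mob W S"
  proof -
    have "(\<Sum>C\<in>Pow S. (-1)^card (insert x S - C) * W C) = (\<Sum>C\<in>Pow S. - ((-1)^card (S - C) * W C))"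
    proof (rule sum.cong)
      fix C assume "C \<in> Pow S"
      hence "insert x S - C = insert x (S - C)" "x \<notin> S - C" "finite (S - C)" using assms by auto
      thus "(-1)^card (insert x S - C) * W C = - ((-1)^card (S - C) * W C)" by simp
    qed simp
    thus ?thesis by (simp add: mob_def sum_negf)
  qed
  also have "(\<Sum>C\<in>Pow S. (-1)^card (insert x S - insert x C) * W (insert x C)) = mob (\<lambda>C. W (insert x C)) S"
    unfolding mob_def
  proof (rule sum.cong)
    fix C assume "C \<in> Pow S"
    hence "insert x S - insert x C = S - C" using assms by auto
    thus "(-1)^card (insert x S - insert x C) * W (insert x C) = (-1)^card (S - C) * W (insert x C)" by simp
  qed simp
  finally show ?thesis by simp
qed

lemma mob_inv: "finite B \<Longrightarrow> (\<Sum>A\<in>Pow B. mob W A) = W B"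
proof (induction B arbitrary: W rule: finite_induct)
  case empty
  then show ?case by (simp add: mob_def)
next
  case (insert x F)
  have "(\<Sum>A\<in>Pow (insert x F). mob W A) = (\<Sum>A\<in>Pow F. mob W A) + (\<Sum>A\<in>Pow F. mob W (insert x A))"
    by (rule sum_Pow_insert[OF insert(1,2)])
  also have "(\<Sum>A\<in>Pow F. mob W (insert x A)) = (\<Sum>A\<in>Pow F. mob (\<lambda>C. W (insert x C)) A - mob W A)"
  proof (rule sum.cong)
    fix A assume "A \<in> Pow F"
    hence "finite A" "x \<notin> A" using insert(1,2) finite_subset by auto
    thus "mob W (insert x A) = mob (\<lambda>C. W (insert x C)) A - mob W A" by (rule mob_insert)
  qed simp
  finally show ?case using insert(3)[of "\<lambda>C. W (insert x C)"] by (simp add: sum_subtractf)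
qed

lemma mob_lin4: "mob (\<lambda>C. W1 C - W2 C - W3 C + W4 C) A = mob W1 A - mob W2 A - mob W3 A + mob W4 A"
  unfolding mob_def by (simp add: algebra_simps sum.distrib sum_subtractf)

lemma mob_dvd: "(\<And>C. C \<in> Pow A \<Longrightarrow> d dvd W C) \<Longrightarrow> d dvd mob W A"
  unfolding mob_def by (auto intro!: dvd_sum)

lemma mob_24:
  assumes "finite D" "2 \<notin> D" "4 \<notin> D"
  shows "mob W (insert 2 (insert 4 D)) =
     mob (\<lambda>C. W (insert 2 (insert 4 C)) - W (insert 2 C) - W (insert 4 C) + W C) D"
proof -
  have "mob W (insert 2 (insert 4 D)) = mob (\<lambda>C. W (insert 2 C)) (insert 4 D) - mob W (insert 4 D)"
    using assms by (simp add: mob_insert)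
  also have "\<dots> = (mob (\<lambda>C. W (insert 2 (insert 4 C))) D - mob (\<lambda>C. W (insert 2 C)) D)
     - (mob (\<lambda>C. W (insert 4 C)) D - mob W D)"
    using assms by (simp add: mob_insert)
  finally show ?thesis by (simp add: mob_lin4)
qed

definition good :: "nat set \<Rightarrow> ((nat \<Rightarrow> int) \<Rightarrow> int) \<Rightarrow> bool" where
  "good I h \<longleftrightarrow> (\<forall>x x1 x2 x3. (\<forall>i\<in>I. 2 dvd (x1 i - x i) \<and> 2 dvd (x2 i - x i) \<and> 4 dvd (x3 i - x1 i - x2 i + x i))
      \<longrightarrow> 2 dvd (h x1 - h x) \<and> 4 dvd (h x3 - h x1 - h x2 + h x))"

lemma good_const: "good I (\<lambda>x. k)" by (simp add: good_def)

lemma good_var: "i \<in> I \<Longrightarrow> good I (\<lambda>x. x i)" by (auto simp: good_def)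

lemma good_add: "good I h \<Longrightarrow> good I k \<Longrightarrow> good I (\<lambda>x. h x + k x)"
  unfolding good_def
proof (intro allI impI)
  fix x x1 x2 x3 :: "nat \<Rightarrow> int"
  assume h: "\<forall>x x1 x2 x3. (\<forall>i\<in>I. 2 dvd (x1 i - x i) \<and> 2 dvd (x2 i - x i) \<and> 4 dvd (x3 i - x1 i - x2 i + x i))
      \<longrightarrow> 2 dvd (h x1 - h x) \<and> 4 dvd (h x3 - h x1 - h x2 + h x)"
    and k: "\<forall>x x1 x2 x3. (\<forall>i\<in>I. 2 dvd (x1 i - x i) \<and> 2 dvd (x2 i - x i) \<and> 4 dvd (x3 i - x1 i - x2 i + x i))
      \<longrightarrow> 2 dvd (k x1 - k x) \<and> 4 dvd (k x3 - k x1 - k x2 + k x)"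
    and c: "\<forall>i\<in>I. 2 dvd (x1 i - x i) \<and> 2 dvd (x2 i - x i) \<and> 4 dvd (x3 i - x1 i - x2 i + x i)"
  from h c have h1: "2 dvd (h x1 - h x)" "4 dvd (h x3 - h x1 - h x2 + h x)" by blast+
  from k c have k1: "2 dvd (k x1 - k x)" "4 dvd (k x3 - k x1 - k x2 + k x)" by blast+
  have "h x1 + k x1 - (h x + k x) = (h x1 - h x) + (k x1 - k x)" by simp
  moreover have "h x3 + k x3 - (h x1 + k x1) - (h x2 + k x2) + (h x + k x) =
      (h x3 - h x1 - h x2 + h x) + (k x3 - k x1 - k x2 + k x)" by simp
  ultimately show "2 dvd (h x1 + k x1 - (h x + k x)) \<and>
       4 dvd (h x3 + k x3 - (h x1 + k x1) - (h x2 + k x2) + (h x + k x))"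
    using h1 k1 by (metis dvd_add)
qed

lemma good_mult: "good I h \<Longrightarrow> good I k \<Longrightarrow> good I (\<lambda>x. h x * k x)"
  unfolding good_def
proof (intro allI impI)
  fix x x1 x2 x3 :: "nat \<Rightarrow> int"
  assume h: "\<forall>x x1 x2 x3. (\<forall>i\<in>I. 2 dvd (x1 i - x i) \<and> 2 dvd (x2 i - x i) \<and> 4 dvd (x3 i - x1 i - x2 i + x i))
      \<longrightarrow> 2 dvd (h x1 - h x) \<and> 4 dvd (h x3 - h x1 - h x2 + h x)"
    and k: "\<forall>x x1 x2 x3. (\<forall>i\<in>I. 2 dvd (x1 i - x i) \<and> 2 dvd (x2 i - x i) \<and> 4 dvd (x3 i - x1 i - x2 i + x i))
      \<longrightarrow> 2 dvd (k x1 - k x) \<and> 4 dvd (k x3 - k x1 - k x2 + k x)"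
    and c: "\<forall>i\<in>I. 2 dvd (x1 i - x i) \<and> 2 dvd (x2 i - x i) \<and> 4 dvd (x3 i - x1 i - x2 i + x i)"
  from c have c': "\<forall>i\<in>I. 2 dvd (x2 i - x i) \<and> 2 dvd (x1 i - x i) \<and> 4 dvd (x3 i - x2 i - x1 i + x i)"
    by (simp add: algebra_simps)
  from h c have h1: "2 dvd (h x1 - h x)" "4 dvd (h x3 - h x1 - h x2 + h x)" by blast+
  from k c have k1: "2 dvd (k x1 - k x)" "4 dvd (k x3 - k x1 - k x2 + k x)" by blast+
  from h c' have h2: "2 dvd (h x2 - h x)" by blast
  from k c' have k2: "2 dvd (k x2 - k x)" by blast
  obtain A where "h x1 - h x = 2 * A" using h1(1) by (metis dvd_def)
  hence A: "h x1 = h x + 2 * A" by simp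
  obtain B where "h x2 - h x = 2 * B" using h2 by (metis dvd_def)
  hence B: "h x2 = h x + 2 * B" by simp
  obtain A' where "k x1 - k x = 2 * A'" using k1(1) by (metis dvd_def)
  hence A': "k x1 = k x + 2 * A'" by simp
  obtain B' where "k x2 - k x = 2 * B'" using k2 by (metis dvd_def)
  hence B': "k x2 = k x + 2 * B'" by simp
  obtain M where M: "h x3 - h x1 - h x2 + h x = 4 * M" using h1(2) by (metis dvd_def)
  obtain M' where M': "k x3 - k x1 - k x2 + k x = 4 * M'" using k1(2) by (metis dvd_def)
  have h3: "h x3 = h x + 2*A + 2*B + 4*M" using M A B by simp
  have k3: "k x3 = k x + 2*A' + 2*B' + 4*M'" using M' A' B' by simp
  define H where "H = h x"
  define K where "K = k x"
  have e1: "h x1 * k x1 - h x * k x = 2 * (H*A' + A*K + 2*A*A')"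
    unfolding A A' H_def K_def by (simp add: algebra_simps)
  have e2: "h x3 * k x3 - h x1 * k x1 - h x2 * k x2 + h x * k x =
     4 * (H*M' + A*B' + 2*A*M' + B*A' + 2*B*M' + M*K + 2*M*A' + 2*M*B' + 4*M*M')"
    unfolding h3 k3 A A' B B' H_def K_def by (simp add: algebra_simps)
  show "2 dvd (h x1 * k x1 - h x * k x) \<and> 4 dvd (h x3 * k x3 - h x1 * k x1 - h x2 * k x2 + h x * k x)"
    unfolding e1 e2 by simp
qed

lemma good_prod: "finite J \<Longrightarrow> (\<And>j. j \<in> J \<Longrightarrow> good I (f j)) \<Longrightarrow> good I (\<lambda>x. \<Prod>j\<in>J. f j x)"
  by (induction J rule: finite_induct) (auto simp: good_const intro!: good_mult)

lemma good_sum: "finite J \<Longrightarrow> (\<And>j. j \<in> J \<Longrightarrow> good I (f j)) \<Longrightarrow> good I (\<lambda>x. \<Sum>j\<in>J. f j x)"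
  by (induction J rule: finite_induct) (auto simp: good_const intro!: good_add)



lemma P4_iff: "B \<in> P4 \<longleftrightarrow> B \<subseteq> {1,2,3,4}"
proof -
  have "{1..4::nat} = {1,2,3,4}" by auto
  thus ?thesis by (simp add: P4_def)
qed

lemma fin_P4: "B \<in> P4 \<Longrightarrow> finite B"
  by (simp add: P4_iff finite_subset)

lemma gcomb_Pow: "B \<in> P4 \<Longrightarrow> gcomb \<alpha> B = (\<Sum>A\<in>Pow B. \<alpha> A) mod 8"
proof -
  assume B: "B \<in> P4"
  have f: "finite P4" by (simp add: P4_def)
  have "{A \<in> P4. A \<subseteq> B} = Pow B" using B by (auto simp: P4_iff)
  thus ?thesis unfolding gcomb_def using sum.inter_filter[OF f, of \<alpha> "\<lambda>A. A \<subseteq> B"] by simp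
qed

lemma mod8_diff: "(d::int) dvd 8 \<Longrightarrow> d dvd (X - Y) \<Longrightarrow> d dvd (X mod 8 - Y mod 8)"
proof -
  assume a: "d dvd 8" "d dvd (X - Y)"
  have "X mod 8 - Y mod 8 = (X - Y) - 8 * (X div 8 - Y div 8)"
    by (simp add: algebra_simps minus_div_mult_eq_mod[symmetric])
  thus ?thesis using a by (simp add: dvd_diff)
qed

lemma mod8_mixed: "(d::int) dvd 8 \<Longrightarrow> d dvd (X3 - X1 - X2 + X0) \<Longrightarrow>
   d dvd (X3 mod 8 - X1 mod 8 - X2 mod 8 + X0 mod 8)"
proof -
  assume a: "d dvd 8" "d dvd (X3 - X1 - X2 + X0)"
  have "X3 mod 8 - X1 mod 8 - X2 mod 8 + X0 mod 8 = (X3 - X1 - X2 + X0) - 8 * (X3 div 8 - X1 div 8 - X2 div 8 + X0 div 8)"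
    by (simp add: algebra_simps minus_div_mult_eq_mod[symmetric])
  thus ?thesis using a by (simp add: dvd_diff)
qed

definition gfun :: "nat \<Rightarrow> (nat \<Rightarrow> int) \<Rightarrow> (nat \<Rightarrow> int) \<Rightarrow> int \<Rightarrow> (nat \<Rightarrow> int) \<Rightarrow> int" where
  "gfun n a b c x = (\<Prod>i=1..n. x i) * ((\<Sum>i=1..n. a i * (x i)^2) + (\<Sum>i=1..n. b i * x i) + c)"

lemma opf_g: "opf n a b c x = (2 * gfun n a b c x) mod 8"
  by (simp add: opf_def gfun_def mult.assoc)

lemma good_g: "good {1..n} (gfun n a b c)"
proof -
  have v: "\<And>i. i \<in> {1..n} \<Longrightarrow> good {1..n} (\<lambda>x. x i)" by (rule good_var)
  have "good {1..n} (\<lambda>x. (\<Prod>i=1..n. x i) * ((\<Sum>i=1..n. a i * (x i * x i)) + (\<Sum>i=1..n. b i * x i) + c))"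
    by (intro good_mult good_add good_prod good_sum good_const v) auto
  thus ?thesis unfolding gfun_def power2_eq_square .
qed

lemma g_even:
  assumes "even ((\<Sum>i=1..n. a i) + (\<Sum>i=1..n. b i) + c)"
  shows "even (gfun n a b c x)"
proof (cases "\<exists>i\<in>{1..n}. even (x i)")
  case True
  then obtain i where "i \<in> {1..n}" "even (x i)" by blast
  hence "x i dvd (\<Prod>i=1..n. x i)" by (intro dvd_prodI) auto
  hence "even (\<Prod>i=1..n. x i)" using \<open>even (x i)\<close> by (metis dvd_trans)
  thus ?thesis unfolding gfun_def by simp
next
  case False
  hence o: "\<And>i. i \<in> {1..n} \<Longrightarrow> odd (x i)" by blast
  have e1: "even (\<Sum>i=1..n. a i * (x i)^2 - a i)"
  proof (rule dvd_sum)
    fix i assume "i \<in> {1..n}"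
    hence "odd (x i)" by (rule o)
    hence "even ((x i)^2 - 1)" by simp
    hence "even (a i * ((x i)^2 - 1))" by simp
    thus "even (a i * (x i)^2 - a i)" by (simp add: algebra_simps)
  qed
  have e2: "even (\<Sum>i=1..n. b i * x i - b i)"
  proof (rule dvd_sum)
    fix i assume "i \<in> {1..n}"
    hence "odd (x i)" by (rule o)
    hence "even (x i - 1)" by simp
    hence "even (b i * (x i - 1))" by simp
    thus "even (b i * x i - b i)" by (simp add: algebra_simps)
  qed
  have "(\<Sum>i=1..n. a i * (x i)^2) + (\<Sum>i=1..n. b i * x i) + c =
      ((\<Sum>i=1..n. a i) + (\<Sum>i=1..n. b i) + c) + (\<Sum>i=1..n. a i * (x i)^2 - a i) + (\<Sum>i=1..n. b i * x i - b i)"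
    by (simp add: sum_subtractf)
  hence "even ((\<Sum>i=1..n. a i * (x i)^2) + (\<Sum>i=1..n. b i * x i) + c)"
    using assms e1 e2 by simp
  thus ?thesis unfolding gfun_def by simp
qed



lemma ins_even:
  assumes Z: "Zcoeffs \<alpha>" and C: "C \<subseteq> {1,3}" and j: "j = 2 \<or> j = 4"
  shows "2 dvd (\<Sum>A\<in>Pow C. \<alpha> (insert j A))"
proof (rule dvd_sum)
  fix A assume "A \<in> Pow C"
  hence A: "A \<subseteq> {1,3}" using C by auto
  have P: "insert j A \<in> P4" using A j by (auto simp: P4_iff)
  show "2 dvd \<alpha> (insert j A)"
  proof (cases "A = {}")
    case True
    have "\<alpha> {2} mod 4 = (2 * \<alpha> {1}) mod 4" "\<alpha> {4} mod 4 = (2 * \<alpha> {3}) mod 4"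
      using Z by (auto simp: Zcoeffs_def)
    hence "\<alpha> {2} mod 2 = 0" "\<alpha> {4} mod 2 = 0" by presburger+
    thus ?thesis using True j by auto
  next
    case False
    have "finite A" "j \<notin> A" using A j finite_subset by auto
    hence "card (insert j A) = Suc (card A)" by simp
    moreover have "card A \<ge> 1" using False \<open>finite A\<close> by (simp add: Suc_leI card_gt_0_iff)
    ultimately have "card (insert j A) \<ge> 2" by simp
    hence "\<alpha> (insert j A) mod 2 = 0" using Z P by (auto simp: Zcoeffs_def)
    thus ?thesis by presburger
  qed
qed

lemma input_props:
  assumes Z: "Zcoeffs \<alpha>" and u: "\<forall>B\<in>P4. u B = gcomb \<alpha> B" and C: "C \<subseteq> {1,3}"
  shows "2 dvd (u (insert 2 C) - u C)" "2 dvd (u (insert 4 C) - u C)"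
    "4 dvd (u (insert 2 (insert 4 C)) - u (insert 2 C) - u (insert 4 C) + u C)"
proof -
  have fC: "finite C" "2 \<notin> C" "4 \<notin> C" using C finite_subset by auto
  have P: "C \<in> P4" "insert 2 C \<in> P4" "insert 4 C \<in> P4" "insert 2 (insert 4 C) \<in> P4"
    using C by (auto simp: P4_iff)
  define S where "S B = (\<Sum>A\<in>Pow B. \<alpha> A)" for B
  have uS: "u B = S B mod 8" if "B \<in> P4" for B using u that gcomb_Pow S_def by simp
  have S2: "S (insert 2 C) - S C = (\<Sum>A\<in>Pow C. \<alpha> (insert 2 A))"
    unfolding S_def using sum_Pow_insert[OF fC(1,2), of \<alpha>] by simp
  have S4: "S (insert 4 C) - S C = (\<Sum>A\<in>Pow C. \<alpha> (insert 4 A))"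
    unfolding S_def using sum_Pow_insert[OF fC(1,3), of \<alpha>] by simp
  have f4: "finite (insert 4 C)" "2 \<notin> insert 4 C" using fC by auto
  have S24: "S (insert 2 (insert 4 C)) = S (insert 4 C) + (\<Sum>A\<in>Pow (insert 4 C). \<alpha> (insert 2 A))"
    unfolding S_def using sum_Pow_insert[OF f4, of \<alpha>] by simp
  have S24b: "(\<Sum>A\<in>Pow (insert 4 C). \<alpha> (insert 2 A)) =
      (\<Sum>A\<in>Pow C. \<alpha> (insert 2 A)) + (\<Sum>A\<in>Pow C. \<alpha> (insert 2 (insert 4 A)))"
    using sum_Pow_insert[OF fC(1,3), of "\<lambda>A. \<alpha> (insert 2 A)"] by simp
  have z: "(\<Sum>A\<in>Pow C. \<alpha> (insert 2 (insert 4 A))) = 0"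
  proof (rule sum.neutral, rule ballI)
    fix A assume "A \<in> Pow C"
    hence "insert 2 (insert 4 A) \<in> P4" using C by (auto simp: P4_iff)
    thus "\<alpha> (insert 2 (insert 4 A)) = 0" using Z by (auto simp: Zcoeffs_def)
  qed
  have m: "S (insert 2 (insert 4 C)) - S (insert 2 C) - S (insert 4 C) + S C = 0"
    using S2 S4 S24 S24b z by simp
  show "2 dvd (u (insert 2 C) - u C)"
    unfolding uS[OF P(2)] uS[OF P(1)] using S2 ins_even[OF Z C] by (intro mod8_diff) auto
  show "2 dvd (u (insert 4 C) - u C)"
    unfolding uS[OF P(3)] uS[OF P(1)] using S4 ins_even[OF Z C] by (intro mod8_diff) auto
  show "4 dvd (u (insert 2 (insert 4 C)) - u (insert 2 C) - u (insert 4 C) + u C)"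
    unfolding uS[OF P(4)] uS[OF P(3)] uS[OF P(2)] uS[OF P(1)] using m by (intro mod8_mixed) auto
qed



lemma forward:
  assumes ev: "even ((\<Sum>i=1..n. a i) + (\<Sum>i=1..n. b i) + c)"
    and us: "\<forall>i\<in>{1..n}. us i \<in> Mrel"
  shows "(\<lambda>B. opf n a b c (\<lambda>i. us i B)) \<in> Mrel"
proof -
  have "\<forall>i\<in>{1..n}. \<exists>\<alpha>. Zcoeffs \<alpha> \<and> (\<forall>B\<in>P4. us i B = gcomb \<alpha> B)"
    using us by (auto simp: Mrel_def)
  then obtain al where al: "\<And>i. i \<in> {1..n} \<Longrightarrow> Zcoeffs (al i) \<and> (\<forall>B\<in>P4. us i B = gcomb (al i) B)"
    by metis
  define W where "W = (\<lambda>B. opf n a b c (\<lambda>i. us i B))"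
  have F1: "4 dvd W B" for B
  proof -
    have "even (gfun n a b c (\<lambda>i. us i B))" by (rule g_even[OF ev])
    hence "4 dvd (2 * gfun n a b c (\<lambda>i. us i B))" by auto
    hence "4 dvd ((2 * gfun n a b c (\<lambda>i. us i B)) mod 8 - 0 mod 8)" by (intro mod8_diff) auto
    thus ?thesis by (simp add: W_def opf_g)
  qed
  have F2: "8 dvd (W (insert 2 (insert 4 C)) - W (insert 2 C) - W (insert 4 C) + W C)"
    if C: "C \<subseteq> {1,3}" for C
  proof -
    have cond: "\<forall>i\<in>{1..n}. 2 dvd (us i (insert 2 C) - us i C) \<and> 2 dvd (us i (insert 4 C) - us i C) \<and>
       4 dvd (us i (insert 2 (insert 4 C)) - us i (insert 2 C) - us i (insert 4 C) + us i C)"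
    proof
      fix i assume i: "i \<in> {1..n}"
      have Z: "Zcoeffs (al i)" and u: "\<forall>B\<in>P4. us i B = gcomb (al i) B" using al[OF i] by auto
      show "2 dvd (us i (insert 2 C) - us i C) \<and> 2 dvd (us i (insert 4 C) - us i C) \<and>
       4 dvd (us i (insert 2 (insert 4 C)) - us i (insert 2 C) - us i (insert 4 C) + us i C)"
        using input_props[OF Z u C] by blast
    qed
    define g0 where "g0 = gfun n a b c (\<lambda>i. us i C)"
    define g1 where "g1 = gfun n a b c (\<lambda>i. us i (insert 2 C))"
    define g2 where "g2 = gfun n a b c (\<lambda>i. us i (insert 4 C))"
    define g3 where "g3 = gfun n a b c (\<lambda>i. us i (insert 2 (insert 4 C)))"
    have g: "4 dvd (g3 - g1 - g2 + g0)"
      unfolding g0_def g1_def g2_def g3_def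
      by (rule good_g[of n a b c, unfolded good_def, rule_format, where ?x="\<lambda>i. us i C" and ?x1.0="\<lambda>i. us i (insert 2 C)"
          and ?x2.0="\<lambda>i. us i (insert 4 C)" and ?x3.0="\<lambda>i. us i (insert 2 (insert 4 C))", OF cond[rule_format], THEN conjunct2])
    obtain k where "g3 - g1 - g2 + g0 = 4 * k" using g by (auto simp: dvd_def)
    hence "2 * g3 - 2 * g1 - 2 * g2 + 2 * g0 = 8 * k" by linarith
    hence "8 dvd (2 * g3 - 2 * g1 - 2 * g2 + 2 * g0)" by simp
    hence "8 dvd ((2 * g3) mod 8 - (2 * g1) mod 8 - (2 * g2) mod 8 + (2 * g0) mod 8)"
      by (rule mod8_mixed[rotated]) simp
    thus ?thesis unfolding W_def opf_g g0_def g1_def g2_def g3_def .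
  qed
  define \<beta> where "\<beta> A = mob W A mod 8" for A
  have b4: "4 dvd \<beta> A" for A
  proof -
    have "4 dvd mob W A" by (rule mob_dvd) (rule F1)
    thus ?thesis unfolding \<beta>_def by (intro dvd_mod) auto
  qed
  have b4': "\<beta> A mod 4 = 0" "\<beta> A mod 2 = 0" for A using b4[of A] by presburger+
  have Z4: "\<beta> A = 0" if A: "A \<in> P4" "{2,4} \<subseteq> A" for A
  proof -
    define D where "D = A - {2,4}"
    have D: "D \<subseteq> {1,3}" "finite D" "2 \<notin> D" "4 \<notin> D" using A by (auto simp: D_def P4_iff finite_subset)
    have AD: "A = insert 2 (insert 4 D)" using A by (auto simp: D_def)
    have "8 dvd mob W A" unfolding AD mob_24[OF D(2-4)]
      by (rule mob_dvd) (rule F2, use D in auto)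
    thus ?thesis unfolding \<beta>_def by simp
  qed
  have rng: "0 \<le> \<beta> A \<and> \<beta> A < 8" for A unfolding \<beta>_def by simp
  have b2: "(2 * \<beta> A) mod 4 = 0" for A using b4'(2)[of A] by presburger
  have Zc: "Zcoeffs \<beta>"
    unfolding Zcoeffs_def using rng b4' b2 Z4 by simp
  have G: "\<forall>B\<in>P4. W B = gcomb \<beta> B"
  proof
    fix B assume B: "B \<in> P4"
    have "gcomb \<beta> B = (\<Sum>A\<in>Pow B. mob W A mod 8) mod 8" unfolding gcomb_Pow[OF B] \<beta>_def ..
    also have "\<dots> = (\<Sum>A\<in>Pow B. mob W A) mod 8" by (rule mod_sum_eq)
    also have "\<dots> = W B mod 8" using mob_inv[OF fin_P4[OF B]] by simp
    also have "\<dots> = W B" by (simp add: W_def opf_def)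
    finally show "W B = gcomb \<beta> B" by simp
  qed
  have "W \<in> Mrel" unfolding Mrel_def using Zc G b4'(1) by blast
  thus ?thesis unfolding W_def .
qed



lemma mem_gen:
  fixes j k :: nat and vj vk :: int
  assumes "j \<noteq> k"
    and Z: "Zcoeffs (\<lambda>A. (if A = {j} then vj else 0) + (if A = {k} then vk else 0))"
    and jk: "{j,k} \<subseteq> {1,2,3,4}" and v: "0 \<le> vj" "0 \<le> vk" "vj + vk < 8"
  shows "(\<lambda>B. (if j \<in> B then vj else 0) + (if k \<in> B then vk else 0)) \<in> Mrel"
  unfolding Mrel_def
proof (intro CollectI exI conjI)
  let ?\<alpha> = "\<lambda>A. (if A = {j} then vj else 0) + (if A = {k} then vk else 0)"
  show "Zcoeffs ?\<alpha>" by (rule Z)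
  show "?\<alpha> {1,3} mod 4 = 0"
  proof -
    have "{1,3::nat} \<noteq> {j}" "{1,3::nat} \<noteq> {k}" by (auto simp: doubleton_eq_iff)
    thus ?thesis by simp
  qed
  show "\<forall>B\<in>P4. (if j \<in> B then vj else 0) + (if k \<in> B then vk else 0) = gcomb ?\<alpha> B"
  proof
    fix B assume B: "B \<in> P4"
    have f: "finite (Pow B)" using fin_P4[OF B] by simp
    have d1: "(\<Sum>A\<in>Pow B. if A = {j} then vj else 0) = (if {j} \<in> Pow B then vj else 0)"
      by (rule sum.delta[OF f])
    have d2: "(\<Sum>A\<in>Pow B. if A = {k} then vk else 0) = (if {k} \<in> Pow B then vk else 0)"
      by (rule sum.delta[OF f])
    have "(\<Sum>A\<in>Pow B. ?\<alpha> A) = (if j \<in> B then vj else 0) + (if k \<in> B then vk else 0)"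
      by (simp only: sum.distrib d1 d2) simp
    thus "(if j \<in> B then vj else 0) + (if k \<in> B then vk else 0) = gcomb ?\<alpha> B"
      unfolding gcomb_Pow[OF B] using v by auto
  qed
qed

lemma mem_u1: "(\<lambda>B. (if (1::nat) \<in> B then 1 else 0) + (if 2 \<in> B then 2 else 0) :: int) \<in> Mrel"
  by (rule mem_gen) (auto simp: Zcoeffs_def)

lemma mem_u2: "(\<lambda>B. (if (3::nat) \<in> B then 1 else 0) + (if 4 \<in> B then 2 else 0) :: int) \<in> Mrel"
  by (rule mem_gen) (auto simp: Zcoeffs_def)

lemma mem_one: "(\<lambda>B. 1 :: int) \<in> Mrel"
proof -
  have "(\<lambda>B::nat set. (if (1::nat) \<in> B then 0 else 0) + (if 2 \<in> B then 0 else 0) + 1 :: int) = (\<lambda>B. 1)" by simp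
  let ?\<alpha> = "\<lambda>A::nat set. if A = {} then 1 else 0 :: int"
  have Z: "Zcoeffs ?\<alpha>" by (auto simp: Zcoeffs_def)
  have G: "\<forall>B\<in>P4. 1 = gcomb ?\<alpha> B"
  proof
    fix B assume B: "B \<in> P4"
    have f: "finite (Pow B)" using fin_P4[OF B] by simp
    have "(\<Sum>A\<in>Pow B. ?\<alpha> A) = 1" using f by simp
    thus "1 = gcomb ?\<alpha> B" unfolding gcomb_Pow[OF B] by simp
  qed
  show ?thesis unfolding Mrel_def using Z G by auto
qed

lemma opf_zero: "i \<in> {1..n} \<Longrightarrow> x i = 0 \<Longrightarrow> opf n a b c x = 0"
proof -
  assume "i \<in> {1..n}" "x i = 0"
  hence "prod x {1..n} = 0" by (intro prod_zero) auto
  thus ?thesis unfolding opf_def by (simp del: prod_zero_iff)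
qed

lemma opf_one: "(\<forall>i\<in>{1..n}. x i = 1) \<Longrightarrow> opf n a b c x = (2 * ((\<Sum>i=1..n. a i) + (\<Sum>i=1..n. b i) + c)) mod 8"
  unfolding opf_def by simp

lemma converse:
  assumes n: "n \<ge> 2" and P: "preserves n (opf n a b c) Mrel"
  shows "even ((\<Sum>i=1..n. a i) + (\<Sum>i=1..n. b i) + c)"
proof (rule ccontr)
  assume od: "odd ((\<Sum>i=1..n. a i) + (\<Sum>i=1..n. b i) + c)"
  define us :: "nat \<Rightarrow> nat set \<Rightarrow> int" where "us i B =
     (if i = 1 then (if 1 \<in> B then 1 else 0) + (if 2 \<in> B then 2 else 0)
      else if i = 2 then (if 3 \<in> B then 1 else 0) + (if 4 \<in> B then 2 else 0) else 1)" for i B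
  have "us i \<in> Mrel" for i
  proof -
    consider "i = 1" | "i = 2" | "i \<noteq> 1 \<and> i \<noteq> 2" by blast
    thus ?thesis
    proof cases
      case 1
      have e: "us i = (\<lambda>B. (if (1::nat) \<in> B then 1 else 0) + (if 2 \<in> B then 2 else 0) :: int)" using 1 by (simp add: us_def fun_eq_iff)
      show ?thesis unfolding e by (rule mem_u1)
    next
      case 2
      have e: "us i = (\<lambda>B. (if (3::nat) \<in> B then 1 else 0) + (if 4 \<in> B then 2 else 0) :: int)" using 2 by (simp add: us_def fun_eq_iff)
      show ?thesis unfolding e by (rule mem_u2)
    next
      case 3
      have e: "us i = (\<lambda>B. 1 :: int)" using 3 by (simp add: us_def fun_eq_iff)
      show ?thesis unfolding e by (rule mem_one)
    qed
  qed
  hence "(\<lambda>B. opf n a b c (\<lambda>i. us i B)) \<in> Mrel" using P unfolding preserves_def by blast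
  then obtain \<beta> where Z: "Zcoeffs \<beta>" and G: "\<forall>B\<in>P4. opf n a b c (\<lambda>i. us i B) = gcomb \<beta> B"
    and m: "\<beta> {1,3} mod 4 = 0" unfolding Mrel_def mem_Collect_eq by auto
  have i1: "1 \<in> {1..n}" and i2: "2 \<in> {1..n}" using n by auto
  have w0: "opf n a b c (\<lambda>i. us i {}) = 0" by (rule opf_zero[OF i1]) (simp add: us_def)
  have w1: "opf n a b c (\<lambda>i. us i {1}) = 0" by (rule opf_zero[OF i2]) (simp add: us_def)
  have w3: "opf n a b c (\<lambda>i. us i {3}) = 0" by (rule opf_zero[OF i1]) (simp add: us_def)
  have w13: "opf n a b c (\<lambda>i. us i {1,3}) = (2 * ((\<Sum>i=1..n. a i) + (\<Sum>i=1..n. b i) + c)) mod 8"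
    by (rule opf_one) (simp add: us_def)
  have P4s: "{} \<in> P4" "{1} \<in> P4" "{3} \<in> P4" "{1,3} \<in> P4" by (auto simp: P4_iff)
  have g0: "gcomb \<beta> {} = \<beta> {} mod 8" unfolding gcomb_Pow[OF P4s(1)] by simp
  have g1: "gcomb \<beta> {1} = (\<beta> {} + \<beta> {1}) mod 8" using sum_Pow_insert[of "{}" 1 \<beta>]
    unfolding gcomb_Pow[OF P4s(2)] by (simp)
  have g3: "gcomb \<beta> {3} = (\<beta> {} + \<beta> {3}) mod 8" using sum_Pow_insert[of "{}" 3 \<beta>]
    unfolding gcomb_Pow[OF P4s(3)] by (simp)
  have g13: "gcomb \<beta> {1,3} = (\<beta> {} + \<beta> {3} + \<beta> {1} + \<beta> {1,3}) mod 8"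
    using sum_Pow_insert[of "{3}" 1 \<beta>] sum_Pow_insert[of "{}" 3 \<beta>] sum_Pow_insert[of "{}" 3 "\<lambda>A. \<beta> (insert 1 A)"]
    unfolding gcomb_Pow[OF P4s(4)] by (simp add: add.assoc)
  have r: "\<forall>A\<in>P4. 0 \<le> \<beta> A \<and> \<beta> A < 8" using Z by (simp add: Zcoeffs_def)
  have r0: "0 \<le> \<beta> {} \<and> \<beta> {} < 8" "0 \<le> \<beta> {1} \<and> \<beta> {1} < 8" "0 \<le> \<beta> {3} \<and> \<beta> {3} < 8"
    "0 \<le> \<beta> {1,3} \<and> \<beta> {1,3} < 8" using r P4s by blast+
  define S where "S = (\<Sum>i=1..n. a i) + (\<Sum>i=1..n. b i) + c"
  have e0: "\<beta> {} mod 8 = 0" using G P4s w0 g0 by auto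
  have e1: "(\<beta> {} + \<beta> {1}) mod 8 = 0" using G P4s w1 g1 by auto
  have e3: "(\<beta> {} + \<beta> {3}) mod 8 = 0" using G P4s w3 g3 by auto
  have e13: "(\<beta> {} + \<beta> {3} + \<beta> {1} + \<beta> {1,3}) mod 8 = (2 * S) mod 8" using G P4s w13 g13 S_def by auto
  have "odd S" using od S_def by simp
  thus False using e0 e1 e3 e13 r0 m by presburger
qed


theorem lemma3p9:
  fixes n :: nat and a b :: "nat \<Rightarrow> int" and c :: int
  assumes "n \<ge> 2"
    and "\<forall>i\<in>{1..n}. a i \<in> {0, 1}"
    and "\<forall>i\<in>{1..n}. b i \<in> {0, 1}"
    and "c \<in> {0, 1, 2, 3}"
  shows "even ((\<Sum>i=1..n. a i) + (\<Sum>i=1..n. b i) + c) \<longleftrightarrow> preserves n (opf n a b c) Mrel"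
proof
  assume "even ((\<Sum>i=1..n. a i) + (\<Sum>i=1..n. b i) + c)"
  thus "preserves n (opf n a b c) Mrel" unfolding preserves_def using forward by blast
next
  assume "preserves n (opf n a b c) Mrel"
  thus "even ((\<Sum>i=1..n. a i) + (\<Sum>i=1..n. b i) + c)" using converse assms(1) by blast
qed

end
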